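(* Let $F\in\mathbb{Q}[x,y]$ be such that $F(\mathbb{R}\times\mathbb{R})=\mathbb{R}$ and $F(\mathbb{Z}\times\mathbb{Z})\supseteq\mathbb{N}$, and suppose the curve $C=\{F(x,y)=0\}\subset\mathbb{A}^2$ is smooth and isomorphic over $\overline{\mathbb{Q}}$ to $\mathbb{A}^1_*$. Let $\phi:\mathbb{P}^1\setminus\{a,b\}\to C$ be an isomorphism. Then the two points $a,b$ (the two places at infinity of $C$) are defined over $\mathbb{R}$.
   Context: $\mathbb{N}$ denotes the set of non-negative integers; $\mathbb{A}^1_*=\mathbb{A}^1\setminus\{0\}$. *)

theory Defs
  imports "HOL-Analysis.Analysis" "HOL-Computational_Algebra.Polynomial"
begin

text \<open>Bivariate polynomials: F in Q[x,y] is represented as an element of (Q[x])[y],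
  i.e. a polynomial in y whose coefficients are polynomials in x.\<close>

definition evalF :: "rat poly poly \<Rightarrow> 'a::field_char_0 \<Rightarrow> 'a \<Rightarrow> 'a" where
  "evalF F x y = poly (map_poly (\<lambda>c. poly (map_poly of_rat c) x) F) y"

definition evalC :: "complex poly poly \<Rightarrow> complex \<Rightarrow> complex \<Rightarrow> complex" where
  "evalC G x y = poly (map_poly (\<lambda>c. poly c x) G) y"

definition dFdx :: "rat poly poly \<Rightarrow> rat poly poly" where
  "dFdx F = map_poly pderiv F"
definition dFdy :: "rat poly poly \<Rightarrow> rat poly poly" where
  "dFdy F = pderiv F"

definition curveC :: "rat poly poly \<Rightarrow> (complex \<times> complex) set" where
  "curveC F = {(x, y). evalF F x y = 0}"

definition smooth_curve :: "rat poly poly \<Rightarrow> bool" where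
  "smooth_curve F \<longleftrightarrow> (\<forall>(x, y) \<in> curveC F. evalF (dFdx F) x y \<noteq> 0 \<or> evalF (dFdy F) x y \<noteq> 0)"

text \<open>Projective line P^1 over C: Some z is the affine point z, None is infinity.\<close>
type_synonym P1 = "complex option"

definition alg_point :: "P1 \<Rightarrow> bool" where
  "alg_point p = (case p of None \<Rightarrow> True | Some z \<Rightarrow> algebraic z)"

definition alg_cpoly :: "complex poly \<Rightarrow> bool" where
  "alg_cpoly p \<longleftrightarrow> (\<forall>i. algebraic (coeff p i))"

definition alg_cpoly2 :: "complex poly poly \<Rightarrow> bool" where
  "alg_cpoly2 G \<longleftrightarrow> (\<forall>i. alg_cpoly (coeff G i))"

definition rf_ok :: "complex poly \<times> complex poly \<Rightarrow> bool" where
  "rf_ok r \<longleftrightarrow> snd r \<noteq> 0 \<and> coprime (fst r) (snd r) \<and> alg_cpoly (fst r) \<and> alg_cpoly (snd r)"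

definition rf_regular :: "complex poly \<times> complex poly \<Rightarrow> P1 \<Rightarrow> bool" where
  "rf_regular r p = (case p of Some z \<Rightarrow> poly (snd r) z \<noteq> 0
                              | None \<Rightarrow> degree (fst r) \<le> degree (snd r))"

definition rf_val :: "complex poly \<times> complex poly \<Rightarrow> P1 \<Rightarrow> complex" where
  "rf_val r p = (case p of Some z \<Rightarrow> poly (fst r) z / poly (snd r) z
                          | None \<Rightarrow> (if degree (fst r) = degree (snd r)
                                     then lead_coeff (fst r) / lead_coeff (snd r) else 0))"

definition proj :: "complex \<Rightarrow> complex \<Rightarrow> P1" where
  "proj u v = (if v = 0 then None else Some (u / v))"

text \<open>phi : P^1 minus {a,b} \<rightarrow> C is an isomorphism of curves defined over the algebraic
  closure of Q: phi is given by rational functions (with algebraic coefficients) regular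
  on P^1 - {a,b}, with values in C, and has an inverse morphism C \<rightarrow> P^1 - {a,b}
  given by [g0 : g1] with g0, g1 polynomials with algebraic coefficients having
  no common zero on C.\<close>
definition is_iso_P1 :: "P1 \<Rightarrow> P1 \<Rightarrow> rat poly poly \<Rightarrow> (P1 \<Rightarrow> complex \<times> complex) \<Rightarrow> bool" where
  "is_iso_P1 a b F \<phi> \<longleftrightarrow> a \<noteq> b \<and> alg_point a \<and> alg_point b \<and>
     (\<exists>r1 r2. rf_ok r1 \<and> rf_ok r2 \<and>
        (\<forall>p \<in> UNIV - {a, b}. rf_regular r1 p \<and> rf_regular r2 p \<and>
                              \<phi> p = (rf_val r1 p, rf_val r2 p))) \<and>
     \<phi> ` (UNIV - {a, b}) \<subseteq> curveC F \<and>
     (\<exists>g0 g1. alg_cpoly2 g0 \<and> alg_cpoly2 g1 \<and>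
        (\<forall>(x, y) \<in> curveC F. (evalC g0 x y \<noteq> 0 \<or> evalC g1 x y \<noteq> 0) \<and>
             proj (evalC g0 x y) (evalC g1 x y) \<in> UNIV - {a, b} \<and>
             \<phi> (proj (evalC g0 x y) (evalC g1 x y)) = (x, y)) \<and>
        (\<forall>p \<in> UNIV - {a, b}. proj (evalC g0 (fst (\<phi> p)) (snd (\<phi> p)))
                                    (evalC g1 (fst (\<phi> p)) (snd (\<phi> p))) = p))"

text \<open>C is isomorphic over the algebraic closure of Q to A^1 minus 0 = P^1 - {0, infinity}.\<close>
definition iso_to_Gm :: "rat poly poly \<Rightarrow> bool" where
  "iso_to_Gm F \<longleftrightarrow> (\<exists>\<psi>. is_iso_P1 (Some 0) None F \<psi>)"

definition P1_at :: "P1 \<Rightarrow> complex filter" where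
  "P1_at p = (case p of Some w \<Rightarrow> at w | None \<Rightarrow> at_infinity)"

definition P1_tendsto :: "('b \<Rightarrow> P1) \<Rightarrow> P1 \<Rightarrow> 'b filter \<Rightarrow> bool" where
  "P1_tendsto f p G = (case p of
      Some w \<Rightarrow> (\<forall>\<^sub>F z in G. f z \<noteq> None) \<and> ((\<lambda>z. the (f z)) \<longlongrightarrow> w) G
    | None \<Rightarrow> (\<forall>\<^sub>F z in G. f z \<noteq> Some 0) \<and>
              ((\<lambda>z. case f z of None \<Rightarrow> 0 | Some v \<Rightarrow> inverse v) \<longlongrightarrow> 0) G)"

text \<open>Complex conjugation on C^2 (it preserves C since F has rational coefficients).\<close>
definition cnj2 :: "complex \<times> complex \<Rightarrow> complex \<times> complex" where
  "cnj2 c = (cnj (fst c), cnj (snd c))"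

text \<open>The real structure of C transported to P^1 - {a,b} via phi.  The place of C
  corresponding to the point a is defined over R iff this antiholomorphic involution
  (which extends to all of P^1) fixes a, i.e. sigma(z) tends to a as z tends to a.\<close>
definition real_place :: "P1 \<Rightarrow> P1 \<Rightarrow> (P1 \<Rightarrow> complex \<times> complex) \<Rightarrow> P1 \<Rightarrow> bool" where
  "real_place a b \<phi> p \<longleftrightarrow>
     P1_tendsto (\<lambda>z. inv_into (UNIV - {a, b}) \<phi> (cnj2 (\<phi> (Some z)))) p (P1_at p)"

end

theory Submission
  imports Defs
begin

definition Gf :: "complex \<Rightarrow> complex \<Rightarrow> complex \<times> real" where
 "Gf u v = (2 * u * cnj v / complex_of_real ((cmod u)^2 + (cmod v)^2),
            ((cmod u)^2 - (cmod v)^2)/((cmod u)^2 + (cmod v)^2))"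
definition io :: "P1 \<Rightarrow> complex \<times> real" where
 "io q = (case q of None \<Rightarrow> (0,1) | Some z \<Rightarrow> Gf z 1)"

lemma Gf_hom: assumes "c \<noteq> 0" shows "Gf (c * u) (c * v) = Gf u v"
proof -
  define k where "k = (cmod c)^2"
  have k0: "k \<noteq> 0" using assms by (simp add: k_def)
  have n: "(cmod (c * u))^2 + (cmod (c * v))^2 = k * ((cmod u)^2 + (cmod v)^2)"
    by (simp add: k_def norm_mult power_mult_distrib algebra_simps)
  have n2: "(cmod (c * u))^2 - (cmod (c * v))^2 = k * ((cmod u)^2 - (cmod v)^2)"
    by (simp add: k_def norm_mult power_mult_distrib algebra_simps)
  have cc: "c * cnj c = complex_of_real k" using complex_norm_square[of c] by (simp add: k_def)
  have x: "2 * (c * u) * cnj (c * v) = complex_of_real k * (2*u*cnj v)"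
    by (simp flip: cc add: algebra_simps)
  have ck: "complex_of_real k \<noteq> 0" using k0 by simp
  show ?thesis unfolding Gf_def n n2 x of_real_mult
    using mult_divide_mult_cancel_left[OF ck] mult_divide_mult_cancel_left[OF k0] by simp
qed

lemma Gf_u0: "u \<noteq> 0 \<Longrightarrow> Gf u 0 = (0,1)"
  by (simp add: Gf_def)

lemma io_proj: assumes "(u,v) \<noteq> (0,0)" shows "io (proj u v) = Gf u v"
proof (cases "v = 0")
  case True
  then show ?thesis using assms by (simp add: proj_def io_def Gf_u0)
next
  case False
  have "proj u v = Some (u/v)" using False by (simp add: proj_def)
  then have "io (proj u v) = Gf (u/v) 1" by (simp add: io_def)
  also have "\<dots> = Gf (v * (u/v)) (v * 1)" by (rule Gf_hom[OF False, symmetric])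
  also have "\<dots> = Gf u v" using False by simp
  finally show ?thesis .
qed

lemma io_Some: "io (Some z) = (2 * z / complex_of_real ((cmod z)^2 + 1), ((cmod z)^2 - 1)/((cmod z)^2 + 1))"
  by (simp add: io_def Gf_def)

lemma io_snd_lt: "snd (io (Some z)) < 1"
proof -
  have p: "(cmod z)^2 + 1 > 0" using zero_le_power2[of "cmod z"] by linarith
  show ?thesis unfolding io_Some using p by (simp add: divide_less_eq)
qed

lemma io_None: "io None = (0,1)" by (simp add: io_def)

lemma io_snd_eq1: "snd (io q) = 1 \<longleftrightarrow> q = None"
proof (cases q)
  case None then show ?thesis by (simp add: io_None)
next
  case (Some z) then show ?thesis using io_snd_lt[of z] by auto
qed

definition sI :: "complex \<times> real \<Rightarrow> complex" where
  "sI w = fst w / complex_of_real (1 - snd w)"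
definition hI :: "complex \<times> real \<Rightarrow> complex" where
  "hI w = cnj (fst w / complex_of_real (1 + snd w))"

lemma sI_io: "sI (io (Some z)) = z"
proof -
  define n where "n = (cmod z)^2"
  have p: "n + 1 > 0" using zero_le_power2[of "cmod z"] unfolding n_def by linarith
  have e: "1 - (n - 1)/(n+1) = 2/(n+1)" using p by (simp add: field_simps)
  have "sI (io (Some z)) = (2 * z / complex_of_real (n + 1)) / complex_of_real (2/(n+1))"
    unfolding sI_def io_Some n_def[symmetric] using e by simp
  also have "\<dots> = z"
  proof -
    define c where "c = complex_of_real (n + 1)"
    have c: "c \<noteq> 0" using p unfolding c_def by (simp only: of_real_eq_0_iff; simp)
    have "complex_of_real (2/(n+1)) = 2 / c" unfolding c_def by (simp only: of_real_divide; simp)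
    then show ?thesis unfolding c_def[symmetric] using c by simp
  qed
  finally show ?thesis .
qed

lemma hI_io: "hI (io q) = (case q of None \<Rightarrow> 0 | Some v \<Rightarrow> inverse v)"
proof (cases q)
  case None then show ?thesis by (simp add: hI_def io_None)
next
  case (Some z)
  define n where "n = (cmod z)^2"
  have p: "n + 1 > 0" using zero_le_power2[of "cmod z"] unfolding n_def by linarith
  show ?thesis
  proof (cases "z = 0")
    case True then show ?thesis using Some by (simp add: hI_def io_Some)
  next
    case False
    have n0: "n > 0" using False by (simp add: n_def)
    have e: "1 + (n - 1)/(n+1) = 2*n/(n+1)" using p by (simp add: field_simps)
    have "hI (io q) = cnj ((2 * z / complex_of_real (n + 1)) / complex_of_real (2*n/(n+1)))"
      unfolding hI_def Some io_Some n_def[symmetric] using e by simp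
    also have "\<dots> = cnj (z / complex_of_real n)"
    proof -
      define c where "c = complex_of_real (n + 1)"
      have c: "c \<noteq> 0" using p unfolding c_def by (simp only: of_real_eq_0_iff; simp)
      have c2: "complex_of_real n \<noteq> 0" using n0 by simp
      have "complex_of_real (2*n/(n+1)) = 2 * complex_of_real n / c" unfolding c_def by (simp only: of_real_divide of_real_mult; simp)
      then show ?thesis unfolding c_def[symmetric] using c c2 by simp
    qed
    also have "\<dots> = cnj z / complex_of_real n" by simp
    also have "\<dots> = inverse z"
    proof -
      have "z * cnj z = complex_of_real n" using complex_norm_square[of z] by (simp add: n_def)
      moreover have "complex_of_real n \<noteq> 0" using n0 by simp
      ultimately show ?thesis using False by (simp add: field_simps)
    qed
    finally show ?thesis using Some by simp
  qed
qed

lemma inj_io: "inj io"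
proof (rule injI)
  fix p q assume e: "io p = io q"
  show "p = q"
  proof (cases p)
    case None then show ?thesis using e io_snd_eq1 by metis
  next
    case (Some z)
    then obtain w where q: "q = Some w" using e io_snd_eq1 by (metis option.exhaust)
    show ?thesis using e sI_io Some q by metis
  qed
qed

lemma tendsto_Gf:
  assumes "(u \<longlongrightarrow> u0) F" "(v \<longlongrightarrow> v0) F" "(u0, v0) \<noteq> (0,0)"
  shows "((\<lambda>x. Gf (u x) (v x)) \<longlongrightarrow> Gf u0 v0) F"
proof -
  have d: "(cmod u0)^2 + (cmod v0)^2 \<noteq> 0" using assms(3) by (simp add: add_nonneg_eq_0_iff)
  show ?thesis unfolding Gf_def
    by (intro tendsto_intros assms(1,2)) (use d in \<open>auto simp del: of_real_add of_real_power\<close>)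
qed

lemma continuous_on_Gf:
  assumes "continuous_on S u" "continuous_on S v" "\<And>x. x \<in> S \<Longrightarrow> (u x, v x) \<noteq> (0,0)"
  shows "continuous_on S (\<lambda>x. Gf (u x) (v x))"
  unfolding continuous_on_def
proof
  fix x assume x: "x \<in> S"
  show "((\<lambda>x. Gf (u x) (v x)) \<longlongrightarrow> Gf (u x) (v x)) (at x within S)"
    using assms x by (intro tendsto_Gf) (auto simp: continuous_on_def)
qed


lemma compact_range_io: "compact (range io)"
proof -
  have "range io = (\<lambda>z. Gf z 1) ` cball 0 1 \<union> (\<lambda>w. Gf 1 w) ` cball 0 1"
  proof
    show "range io \<subseteq> (\<lambda>z. Gf z 1) ` cball 0 1 \<union> (\<lambda>w. Gf 1 w) ` cball 0 1"
    proof
      fix s assume "s \<in> range io"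
      then obtain q where s: "s = io q" by auto
      show "s \<in> (\<lambda>z. Gf z 1) ` cball 0 1 \<union> (\<lambda>w. Gf 1 w) ` cball 0 1"
      proof (cases q)
        case None
        then have "s = Gf 1 0" using s by (simp add: io_None Gf_u0)
        then show ?thesis by auto
      next
        case (Some z)
        show ?thesis
        proof (cases "cmod z \<le> 1")
          case True then show ?thesis using s Some by (auto simp: io_def)
        next
          case False
          then have z0: "z \<noteq> 0" by auto
          have "Gf 1 (inverse z) = Gf (inverse z * z) (inverse z * 1)" using z0 by simp
          also have "\<dots> = Gf z 1" using z0 by (intro Gf_hom) simp
          finally have "s = Gf 1 (inverse z)" using s Some by (simp add: io_def)
          moreover have "inverse z \<in> cball 0 1" using False by (auto simp: norm_inverse inverse_le_1_iff)
          ultimately show ?thesis by auto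
        qed
      qed
    qed
  next
    show "(\<lambda>z. Gf z 1) ` cball 0 1 \<union> (\<lambda>w. Gf 1 w) ` cball 0 1 \<subseteq> range io"
    proof
      fix s assume "s \<in> (\<lambda>z. Gf z 1) ` cball 0 1 \<union> (\<lambda>w. Gf 1 w) ` cball 0 1"
      then show "s \<in> range io"
      proof
        assume "s \<in> (\<lambda>z. Gf z 1) ` cball 0 1"
        then obtain z where "s = io (Some z)" by (auto simp: io_def)
        then show ?thesis by auto
      next
        assume "s \<in> (\<lambda>w. Gf 1 w) ` cball 0 1"
        then obtain w where "s = Gf 1 w" by auto
        then have "s = io (proj 1 w)" by (simp add: io_proj)
        then show ?thesis by auto
      qed
    qed
  qed
  moreover have "compact ((\<lambda>z. Gf z 1) ` cball 0 1)"
    by (intro compact_continuous_image continuous_on_Gf continuous_intros) auto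
  moreover have "compact ((\<lambda>w. Gf 1 w) ` cball 0 1)"
    by (intro compact_continuous_image continuous_on_Gf continuous_intros) auto
  ultimately show ?thesis by auto
qed

lemma P1_at_nontriv: "P1_at p \<noteq> bot"
  by (cases p) (auto simp: P1_at_def trivial_limit_at_infinity)

lemma tendsto_io_P1_at: "((\<lambda>z. io (Some z)) \<longlongrightarrow> io p) (P1_at p)"
proof (cases p)
  case (Some w)
  have "((\<lambda>z. Gf z 1) \<longlongrightarrow> Gf w 1) (at w)"
    by (intro tendsto_Gf tendsto_intros) auto
  then show ?thesis using Some by (simp add: P1_at_def io_def)
next
  case None
  have ev: "eventually (\<lambda>z. Gf 1 (inverse z) = io (Some z)) at_infinity"
  proof -
    have "eventually (\<lambda>z::complex. norm z \<ge> 1) at_infinity" by (auto simp: eventually_at_infinity)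
    then show ?thesis
    proof (rule eventually_mono)
      fix z :: complex assume "norm z \<ge> 1"
      then have z0: "z \<noteq> 0" by auto
      have "proj 1 (inverse z) = Some z" using z0 by (simp add: proj_def divide_inverse)
      then show "Gf 1 (inverse z) = io (Some z)" using io_proj[of 1 "inverse z"] by simp
    qed
  qed
  have "((\<lambda>z. Gf 1 (inverse z)) \<longlongrightarrow> Gf 1 0) at_infinity"
    by (intro tendsto_Gf tendsto_inverse_0 tendsto_intros) auto
  then have "((\<lambda>z. io (Some z)) \<longlongrightarrow> Gf 1 0) at_infinity"
    using ev by (rule Lim_transform_eventually)
  then show ?thesis using None by (simp add: P1_at_def io_None Gf_u0)
qed

lemma isCont_sI: "snd w \<noteq> 1 \<Longrightarrow> isCont sI w"
  unfolding sI_def by (intro continuous_intros) auto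

lemma isCont_hI: "snd w \<noteq> -1 \<Longrightarrow> isCont hI w"
  unfolding hI_def by (intro continuous_intros) (auto simp: add_eq_0_iff, metis of_real_1 of_real_eq_iff of_real_minus)

lemma P1_nbhd:
  assumes ev: "eventually P (P1_at p)"
  shows "\<exists>d>0. \<forall>q. dist (io q) (io p) < d \<and> q \<noteq> p \<longrightarrow> (\<exists>z. q = Some z \<and> P z)"
proof (cases p)
  case (Some w)
  then obtain r where r: "r > 0" "\<And>z. z \<noteq> w \<Longrightarrow> dist z w < r \<Longrightarrow> P z"
    using ev by (auto simp: P1_at_def eventually_at)
  have c: "isCont sI (io p)" using Some io_snd_lt[of w] by (intro isCont_sI) auto
  then obtain d1 where d1: "d1 > 0" "\<And>y. dist y (io p) < d1 \<Longrightarrow> dist (sI y) (sI (io p)) < r"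
    using r(1) unfolding continuous_at_eps_delta by blast
  define d where "d = min d1 (1 - snd (io p))"
  have d0: "d > 0" using d1 Some io_snd_lt[of w] by (simp add: d_def)
  show ?thesis
  proof (intro exI[of _ d] conjI allI impI d0)
    fix q assume q: "dist (io q) (io p) < d \<and> q \<noteq> p"
    have "dist (snd (io q)) (snd (io p)) < 1 - snd (io p)"
      using dist_snd_le[of "io q" "io p"] q by (simp add: d_def)
    then have "snd (io q) \<noteq> 1" by (auto simp: dist_real_def)
    then obtain z where z: "q = Some z" using io_snd_eq1 by (cases q) auto
    have "dist z w < r" using d1(2)[of "io q"] q z Some by (simp add: d_def sI_io)
    moreover have "z \<noteq> w" using q z Some by auto
    ultimately show "\<exists>z. q = Some z \<and> P z" using z r(2) by auto
  qed
next
  case None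
  then obtain R where R: "\<And>z. R \<le> norm z \<Longrightarrow> P z"
    using ev by (auto simp: P1_at_def eventually_at_infinity)
  define d where "d = 2 / ((abs R)^2 + 1)"
  have d0: "d > 0" unfolding d_def using zero_le_power2[of "abs R"] by (simp add: add_nonneg_pos)
  show ?thesis
  proof (intro exI[of _ d] conjI allI impI d0)
    fix q assume q: "dist (io q) (io p) < d \<and> q \<noteq> p"
    then obtain z where z: "q = Some z" using None by (cases q) auto
    define n where "n = (cmod z)^2"
    have np: "n + 1 > 0" using zero_le_power2[of "cmod z"] unfolding n_def by linarith
    have "dist (snd (io q)) (snd (io p)) < d"
      using dist_snd_le[of "io q" "io p"] q by simp
    then have "1 - (n - 1)/(n+1) < d" using None z by (simp add: io_Some io_None n_def dist_real_def)
    moreover have "1 - (n - 1)/(n+1) = 2/(n+1)" using np by (simp add: field_simps)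
    ultimately have "2/(n+1) < 2/((abs R)^2 + 1)" by (simp add: d_def)
    moreover have "\<not> n \<le> (abs R)^2"
    proof
      assume "n \<le> (abs R)^2"
      then have "2/((abs R)^2+1) \<le> 2/(n+1)" by (intro divide_left_mono) (use np in auto)
      then show False using \<open>2/(n+1) < 2/((abs R)^2 + 1)\<close> by simp
    qed
    ultimately have "(abs R)^2 < n" by simp
    then have "(abs R)^2 < (cmod z)^2" by (simp add: n_def)
    then have "abs R < cmod z" using power_less_imp_less_base[of "abs R" 2 "cmod z"] by simp
    then have "P z" using R by auto
    then show "\<exists>z. q = Some z \<and> P z" using z by auto
  qed
qed

lemma P1_tendsto_io:
  assumes t: "((\<lambda>x. io (f x)) \<longlongrightarrow> io p) G"
  shows "P1_tendsto f p G"
proof (cases p)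
  case (Some w)
  have pos: "1 - snd (io p) > 0" using Some io_snd_lt[of w] by simp
  have ev: "eventually (\<lambda>x. dist (io (f x)) (io p) < 1 - snd (io p)) G"
    using tendstoD[OF t pos] .
  have ev2: "eventually (\<lambda>x. f x \<noteq> None \<and> sI (io (f x)) = the (f x)) G"
    using ev
  proof (rule eventually_mono)
    fix x assume "dist (io (f x)) (io p) < 1 - snd (io p)"
    then have "dist (snd (io (f x))) (snd (io p)) < 1 - snd (io p)"
      using dist_snd_le[of "io (f x)" "io p"] by simp
    then have "snd (io (f x)) \<noteq> 1" by (auto simp: dist_real_def)
    then obtain z where "f x = Some z" using io_snd_eq1 by (cases "f x") auto
    then show "f x \<noteq> None \<and> sI (io (f x)) = the (f x)" by (simp add: sI_io)
  qed
  have "((\<lambda>x. sI (io (f x))) \<longlongrightarrow> sI (io p)) G"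
    using isCont_tendsto_compose[OF isCont_sI t] Some io_snd_lt[of w] by auto
  then have "((\<lambda>x. sI (io (f x))) \<longlongrightarrow> w) G" using Some by (simp add: sI_io)
  then have "((\<lambda>x. the (f x)) \<longlongrightarrow> w) G"
    by (rule Lim_transform_eventually) (use ev2 in \<open>auto elim: eventually_mono\<close>)
  then show ?thesis using Some ev2 unfolding P1_tendsto_def by (auto elim: eventually_mono)
next
  case None
  have pos: "(2::real) > 0" by simp
  have ev: "eventually (\<lambda>x. dist (io (f x)) (io p) < 2) G"
    using tendstoD[OF t pos] .
  have ev2: "eventually (\<lambda>x. f x \<noteq> Some 0) G"
    using ev
  proof (rule eventually_mono)
    fix x assume a: "dist (io (f x)) (io p) < 2"
    show "f x \<noteq> Some 0"
    proof
      assume "f x = Some 0"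
      then have "dist (snd (io (f x))) (snd (io p)) = 2"
        using None by (simp add: io_Some io_None dist_real_def)
      then show False using a dist_snd_le[of "io (f x)" "io p"] by simp
    qed
  qed
  have "((\<lambda>x. hI (io (f x))) \<longlongrightarrow> hI (io p)) G"
    using isCont_tendsto_compose[OF isCont_hI t] None by (auto simp: io_None)
  then have "((\<lambda>x. case f x of None \<Rightarrow> 0 | Some v \<Rightarrow> inverse v) \<longlongrightarrow> 0) G"
    using None by (simp add: hI_io)
  then show ?thesis using None ev2 unfolding P1_tendsto_def by auto
qed


lemma poly_sum_le: "degree (p::'a::comm_semiring_1 poly) \<le> n \<Longrightarrow> poly p x = (\<Sum>i\<le>n. coeff p i * x^i)"
  apply (subst poly_altdef)
  apply (rule sum.mono_neutral_left)
  apply (auto simp: coeff_eq_0)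
  done

lemma evalF_sum: "evalF F x y = (\<Sum>i\<le>degree F. poly (map_poly of_rat (coeff F i)) x * y^i)"
  unfolding evalF_def
  by (subst poly_sum_le[OF map_poly_degree_leq]) (simp add: coeff_map_poly)

lemma poly_of_rat_sum: "poly (map_poly of_rat c) x = (\<Sum>j\<le>degree c. of_rat (coeff c j) * x^j)"
  by (subst poly_sum_le[OF map_poly_degree_leq]) (simp add: coeff_map_poly)

lemma evalC_sum: "evalC G x y = (\<Sum>i\<le>degree G. poly (coeff G i) x * y^i)"
  unfolding evalC_def
  by (subst poly_sum_le[OF map_poly_degree_leq]) (simp add: coeff_map_poly)

lemma continuous_on_evalF:
  fixes f g :: "'b::topological_space \<Rightarrow> 'a::{real_normed_field,field_char_0}"
  assumes "continuous_on S f" "continuous_on S g"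
  shows "continuous_on S (\<lambda>z. evalF F (f z) (g z))"
  unfolding evalF_sum by (intro continuous_intros assms)

lemma continuous_on_evalC:
  assumes "continuous_on S f" "continuous_on S g"
  shows "continuous_on S (\<lambda>z. evalC G (f z) (g z))"
  unfolding evalC_sum by (intro continuous_intros assms)

lemma cnj_of_rat: "cnj (of_rat r) = of_rat r"
proof -
  obtain a b where "r = Fract a b" "b \<noteq> 0" by (cases r) auto
  then show ?thesis by (simp add: of_rat_rat)
qed

lemma of_real_of_rat': "complex_of_real (of_rat r) = of_rat r"
proof -
  obtain a b where "r = Fract a b" "b \<noteq> 0" by (cases r) auto
  then show ?thesis by (simp add: of_rat_rat of_real_divide)
qed

lemma cnj_evalF: "cnj (evalF F x y) = evalF F (cnj x) (cnj y)"
  unfolding evalF_sum poly_of_rat_sum by (simp add: cnj_of_rat)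

lemma of_real_evalF: "complex_of_real (evalF F x y) = evalF F (complex_of_real x) (complex_of_real y)"
  unfolding evalF_sum poly_of_rat_sum by (simp add: of_real_of_rat')

lemma closed_curveC: "closed (curveC F)"
proof -
  have "curveC F = {c. evalF F (fst c) (snd c) = 0}" by (auto simp: curveC_def)
  moreover have "closed {c::complex\<times>complex. evalF F (fst c) (snd c) = 0}"
    by (intro closed_Collect_eq continuous_on_evalF continuous_intros)
  ultimately show ?thesis by simp
qed

lemma cnj2_curveC: "c \<in> curveC F \<Longrightarrow> cnj2 c \<in> curveC F"
  using cnj_evalF[of F "fst c" "snd c"] by (cases c) (auto simp: curveC_def cnj2_def)

lemma norm_cnj2: "norm (cnj2 c) = norm c"
  by (cases c) (simp add: cnj2_def norm_Pair)

lemma cnj2_cnj2: "cnj2 (cnj2 c) = c"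
  by (simp add: cnj2_def)


lemma ev_ne: "eventually (\<lambda>z. Some z \<noteq> q) (P1_at p)"
proof (cases q)
  case None then show ?thesis by simp
next
  case (Some w')
  show ?thesis
  proof (cases p)
    case (Some w)
    then show ?thesis using \<open>q = Some w'\<close> eventually_neq_at_within[of w' w UNIV]
      by (simp add: P1_at_def)
  next
    case None
    have "eventually (\<lambda>z::complex. norm z \<ge> norm w' + 1) at_infinity"
      by (auto simp: eventually_at_infinity)
    then show ?thesis using None \<open>q = Some w'\<close> unfolding P1_at_def
      by (auto elim!: eventually_mono)
  qed
qed

lemma conn_nbhd:
  assumes "eventually P (P1_at p)"
  shows "\<exists>N. connected N \<and> (\<forall>z\<in>N. P z) \<and> eventually (\<lambda>z. z \<in> N) (P1_at p)"
proof (cases p)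
  case (Some w)
  then obtain r where r: "r > 0" "\<And>z. z \<noteq> w \<Longrightarrow> dist z w < r \<Longrightarrow> P z"
    using assms by (auto simp: P1_at_def eventually_at)
  have "connected (ball w r - {w})" by (rule connected_punctured_ball) simp
  moreover have "\<forall>z\<in>ball w r - {w}. P z" using r by (auto simp: dist_commute)
  moreover have "eventually (\<lambda>z. z \<in> ball w r - {w}) (P1_at p)"
    using Some r(1) by (auto simp: P1_at_def eventually_at dist_commute)
  ultimately show ?thesis by blast
next
  case None
  then obtain R where R: "\<And>z. R \<le> norm z \<Longrightarrow> P z"
    using assms by (auto simp: P1_at_def eventually_at_infinity)
  have "connected (- cball (0::complex) (abs R))"
    by (rule connected_complement_bounded_convex) auto
  moreover have "\<forall>z\<in>- cball 0 (abs R). P z" using R by auto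
  moreover have "eventually (\<lambda>z. z \<in> - cball (0::complex) (abs R)) at_infinity"
    unfolding eventually_at_infinity by (intro exI[of _ "abs R + 1"]) auto
  then have "eventually (\<lambda>z. z \<in> - cball (0::complex) (abs R)) (P1_at p)"
    using None by (simp add: P1_at_def)
  ultimately show ?thesis by blast
qed

lemma rf_inf_bound:
  fixes P Q :: "complex poly"
  assumes Q0: "Q \<noteq> 0" and deg: "degree P \<le> degree Q"
  shows "\<exists>C. eventually (\<lambda>z. norm (poly P z / poly Q z) \<le> C) at_infinity"
proof -
  define m where "m = degree P"
  define n where "n = degree Q"
  define A where "A = norm (lead_coeff P) + 1"
  define B where "B = norm (lead_coeff Q) / 2"
  have B0: "B > 0" using Q0 by (simp add: B_def)
  have e1: "eventually (\<lambda>z. dist (poly P z / z^m) (lead_coeff P) < 1) at_infinity"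
    using tendstoD[OF poly_divide_tendsto_aux[of P]] by (simp add: m_def)
  have e2: "eventually (\<lambda>z. dist (poly Q z / z^n) (lead_coeff Q) < B) at_infinity"
    using tendstoD[OF poly_divide_tendsto_aux[of Q] B0] by (simp add: n_def)
  have e3: "eventually (\<lambda>z::complex. norm z \<ge> 1) at_infinity"
    by (auto simp: eventually_at_infinity)
  have "eventually (\<lambda>z. norm (poly P z / poly Q z) \<le> A / B) at_infinity"
    using e1 e2 e3
  proof (eventually_elim)
    case (elim z)
    have z0: "z \<noteq> 0" using elim(3) by auto
    have nz: "norm z ^ m \<le> norm z ^ n" using elim(3) deg
      by (intro power_increasing) (auto simp: m_def n_def)
    have "norm (poly P z / z^m) \<le> A"
      using elim(1) norm_triangle_ineq2[of "poly P z / z^m" "lead_coeff P"]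
      by (simp add: A_def dist_norm)
    then have a: "norm (poly P z) \<le> A * norm z ^ m" using z0
      by (simp add: norm_divide norm_power divide_le_eq)
    have "norm (poly Q z / z^n) \<ge> B"
      using elim(2) norm_triangle_ineq2[of "lead_coeff Q" "poly Q z / z^n"]
      by (simp add: B_def dist_norm norm_minus_commute)
    then have b: "norm (poly Q z) \<ge> B * norm z ^ n" using z0
      by (simp add: norm_divide norm_power le_divide_eq)
    have zn: "norm z ^ n > 0" using z0 by simp
    have A0: "A \<ge> 0" by (simp add: A_def)
    have "norm (poly P z / poly Q z) = norm (poly P z) / norm (poly Q z)" by (simp add: norm_divide)
    also have "\<dots> \<le> (A * norm z ^ n) / (B * norm z ^ n)"
    proof (rule frac_le)
      show "0 \<le> A * norm z ^ n" using A0 by simp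
      show "norm (poly P z) \<le> A * norm z ^ n" using a nz A0
        by (meson mult_left_mono order_trans)
      show "0 < B * norm z ^ n" using B0 zn by simp
      show "B * norm z ^ n \<le> norm (poly Q z)" using b .
    qed
    also have "\<dots> = A / B" by (rule mult_divide_mult_cancel_right) (use zn in \<open>simp only: less_irrefl\<close>)
    finally show ?case .
  qed
  then show ?thesis by blast
qed

lemma real_bounded_zero_not_surj:
  assumes bd: "\<And>x y::real. evalF F x y = 0 \<Longrightarrow> norm (x,y) \<le> M"
    and surj: "\<forall>r::real. \<exists>x y::real. evalF F x y = r"
  shows False
proof -
  define f where "f = (\<lambda>v::real\<times>real. evalF F (fst v) (snd v))"
  have fc: "continuous_on A f" for A unfolding f_def
    by (intro continuous_on_evalF continuous_intros)
  define S where "S = - cball (0::real\<times>real) (abs M)"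
  have conS: "connected S" unfolding S_def
    by (rule connected_complement_bounded_convex) auto
  have nz: "f v \<noteq> 0" if "v \<in> S" for v
  proof
    assume "f v = 0"
    then have "norm v \<le> M" using bd[of "fst v" "snd v"] by (simp add: f_def)
    then show False using that by (simp add: S_def)
  qed
  have conI: "connected (f ` S)" by (rule connected_continuous_image[OF fc conS])
  define v0 where "v0 = (abs M + 1, 0::real)"
  have v0S: "v0 \<in> S" by (simp add: S_def v0_def norm_Pair)
  obtain B where B: "\<And>v. v \<in> cball 0 (abs M) \<Longrightarrow> abs (f v) \<le> B"
  proof -
    have "compact (f ` cball 0 (abs M))" by (intro compact_continuous_image fc) simp
    then obtain B where "\<forall>x\<in>f ` cball 0 (abs M). norm x \<le> B"
      using compact_imp_bounded bounded_iff by metis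
    then show ?thesis using that by (metis image_eqI real_norm_def)
  qed
  show False
  proof (cases "f v0 > 0")
    case True
    have pos: "f v > 0" if "v \<in> S" for v
    proof (rule ccontr)
      assume "\<not> f v > 0"
      then have "f v \<le> 0" by simp
      then have "0 \<in> f ` S" using connectedD_interval[OF conI, of "f v" "f v0" 0] that v0S True
        by auto
      then show False using nz by auto
    qed
    have "\<forall>v. f v > - B - 1"
    proof
      fix v show "f v > - B - 1"
      proof (cases "v \<in> S")
        case True then show ?thesis using pos[OF True] B[of 0] by auto
      next
        case False then have "v \<in> cball 0 (abs M)" by (simp add: S_def)
        then have "abs (f v) \<le> B" using B by blast
        then show ?thesis by linarith
      qed
    qed
    moreover obtain x y where "evalF F x y = - B - 1" using surj by blast
    ultimately show False by (metis f_def fst_conv snd_conv less_irrefl)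
  next
    case False
    then have neg0: "f v0 < 0" using nz[OF v0S] by simp
    have neg: "f v < 0" if "v \<in> S" for v
    proof (rule ccontr)
      assume "\<not> f v < 0"
      then have "f v \<ge> 0" by simp
      then have "0 \<in> f ` S" using connectedD_interval[OF conI, of "f v0" "f v" 0] that v0S neg0
        by auto
      then show False using nz by auto
    qed
    have "\<forall>v. f v < B + 1"
    proof
      fix v show "f v < B + 1"
      proof (cases "v \<in> S")
        case True then show ?thesis using neg[OF True] B[of 0] by auto
      next
        case False then have "v \<in> cball 0 (abs M)" by (simp add: S_def)
        then have "abs (f v) \<le> B" using B by blast
        then show ?thesis by linarith
      qed
    qed
    moreover obtain x y where "evalF F x y = B + 1" using surj by blast
    ultimately show False by (metis f_def fst_conv snd_conv less_irrefl)
  qed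
qed



locale setting =
  fixes F :: "rat poly poly" and a b :: P1 and \<phi> :: "P1 \<Rightarrow> complex \<times> complex"
    and r1 r2 :: "complex poly \<times> complex poly" and g0 g1 :: "complex poly poly"
  assumes ab: "a \<noteq> b"
    and r1ok: "snd r1 \<noteq> 0" and r2ok: "snd r2 \<noteq> 0"
    and phi: "\<And>p. p \<notin> {a,b} \<Longrightarrow> rf_regular r1 p \<and> rf_regular r2 p \<and> \<phi> p = (rf_val r1 p, rf_val r2 p)"
    and phiQ: "\<And>p. p \<notin> {a,b} \<Longrightarrow> \<phi> p \<in> curveC F"
    and gQ: "\<And>x y. (x,y) \<in> curveC F \<Longrightarrow> (evalC g0 x y \<noteq> 0 \<or> evalC g1 x y \<noteq> 0) \<and>
               proj (evalC g0 x y) (evalC g1 x y) \<notin> {a,b} \<and>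
               \<phi> (proj (evalC g0 x y) (evalC g1 x y)) = (x,y)"
    and gphi: "\<And>p. p \<notin> {a,b} \<Longrightarrow>
               proj (evalC g0 (fst (\<phi> p)) (snd (\<phi> p))) (evalC g1 (fst (\<phi> p)) (snd (\<phi> p))) = p"
begin

definition psi :: "complex \<times> complex \<Rightarrow> P1" where
  "psi c = proj (evalC g0 (fst c) (snd c)) (evalC g1 (fst c) (snd c))"
definition sig :: "P1 \<Rightarrow> P1" where
  "sig p = psi (cnj2 (\<phi> p))"
definition rfz :: "complex \<Rightarrow> complex \<times> complex" where
  "rfz z = (poly (fst r1) z / poly (snd r1) z, poly (fst r2) z / poly (snd r2) z)"

abbreviation "Q \<equiv> curveC F"

lemma psi_U: "c \<in> Q \<Longrightarrow> psi c \<notin> {a,b}"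
  using gQ[of "fst c" "snd c"] by (simp add: psi_def)
lemma phi_psi: "c \<in> Q \<Longrightarrow> \<phi> (psi c) = c"
  using gQ[of "fst c" "snd c"] by (simp add: psi_def)
lemma psi_phi: "p \<notin> {a,b} \<Longrightarrow> psi (\<phi> p) = p"
  using gphi by (simp add: psi_def)
lemma io_psi: "c \<in> Q \<Longrightarrow> io (psi c) = Gf (evalC g0 (fst c) (snd c)) (evalC g1 (fst c) (snd c))"
  using gQ[of "fst c" "snd c"] unfolding psi_def by (intro io_proj) auto

lemma cont_io_psi: "continuous_on Q (\<lambda>c. io (psi c))"
proof -
  have "continuous_on Q (\<lambda>c. Gf (evalC g0 (fst c) (snd c)) (evalC g1 (fst c) (snd c)))"
    by (intro continuous_on_Gf continuous_on_evalC continuous_intros)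
       (use gQ in \<open>auto simp: case_prod_beta\<close>)
  then show ?thesis by (rule continuous_on_cong[THEN iffD1, rotated 2]) (auto simp: io_psi)
qed

lemma phi_Some: "Some z \<notin> {a,b} \<Longrightarrow> \<phi> (Some z) = rfz z \<and> poly (snd r1) z \<noteq> 0 \<and> poly (snd r2) z \<noteq> 0"
  using phi[of "Some z"] by (simp add: rf_regular_def rf_val_def rfz_def)

lemma sig_U: "p \<notin> {a,b} \<Longrightarrow> sig p \<notin> {a,b}"
  unfolding sig_def by (intro psi_U cnj2_curveC phiQ)

lemma sig_sig: "p \<notin> {a,b} \<Longrightarrow> sig (sig p) = p"
proof -
  assume p: "p \<notin> {a,b}"
  have c: "cnj2 (\<phi> p) \<in> Q" using p by (intro cnj2_curveC phiQ)
  have "\<phi> (sig p) = cnj2 (\<phi> p)" unfolding sig_def using phi_psi[OF c] .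
  then show ?thesis unfolding sig_def[of "sig p"] using psi_phi[OF p] by (simp add: cnj2_cnj2)
qed

lemma inv_phi: "c \<in> Q \<Longrightarrow> inv_into (UNIV - {a,b}) \<phi> c = psi c"
proof -
  assume c: "c \<in> Q"
  have "inj_on \<phi> (UNIV - {a,b})" by (rule inj_on_inverseI[of _ psi]) (auto simp: psi_phi)
  then show ?thesis by (rule inv_into_f_eq) (use c psi_U phi_psi in auto)
qed

lemma ev_U: "eventually (\<lambda>z. Some z \<notin> {a,b}) (P1_at p)"
  using ev_ne[of a p] ev_ne[of b p] by (auto elim: eventually_elim2)

lemma norm_big:
  assumes p: "p \<in> {a,b}"
  shows "eventually (\<lambda>z. norm (\<phi> (Some z)) > M) (P1_at p)"
proof -
  define K where "K = Q \<inter> cball 0 M"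
  have cK: "compact K" unfolding K_def by (intro closed_Int_compact closed_curveC compact_cball)
  define L where "L = (\<lambda>c. io (psi c)) ` K"
  have cL: "compact L" unfolding L_def
    by (intro compact_continuous_image continuous_on_subset[OF cont_io_psi]) (use cK K_def in auto)
  have pL: "io p \<notin> L"
  proof
    assume "io p \<in> L"
    then obtain c where c: "c \<in> K" "io p = io (psi c)" by (auto simp: L_def)
    then have "p = psi c" using inj_io by (auto dest: injD)
    then show False using psi_U[of c] c(1) p by (auto simp: K_def)
  qed
  obtain d where d: "d > 0" "\<forall>x\<in>L. d \<le> dist (io p) x"
    using separate_point_closed[OF compact_imp_closed[OF cL] pL] by blast
  have e1: "eventually (\<lambda>z. dist (io (Some z)) (io p) < d) (P1_at p)"
    using tendstoD[OF tendsto_io_P1_at d(1)] .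
  show ?thesis using e1 ev_U[of p]
  proof (eventually_elim)
    case (elim z)
    show ?case
    proof (rule ccontr)
      assume "\<not> M < norm (\<phi> (Some z))"
      then have "\<phi> (Some z) \<in> K" using phiQ[OF elim(2)] by (auto simp: K_def)
      then have "io (psi (\<phi> (Some z))) \<in> L" by (auto simp: L_def)
      then have "io (Some z) \<in> L" using psi_phi[OF elim(2)] by simp
      then show False using d(2) elim(1) by (auto simp: dist_commute)
    qed
  qed
qed


lemma loc_bound:
  assumes p: "p \<notin> {a,b}"
  shows "\<exists>d>0. \<exists>C. \<forall>q. q \<notin> {a,b} \<and> dist (io q) (io p) < d \<longrightarrow> norm (\<phi> q) \<le> C"
proof -
  obtain C0 where C0: "eventually (\<lambda>z. Some z \<notin> {a,b} \<longrightarrow> norm (\<phi> (Some z)) \<le> C0) (P1_at p)"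
  proof (cases p)
    case (Some w)
    have nz: "poly (snd r1) w \<noteq> 0" "poly (snd r2) w \<noteq> 0" using phi_Some[of w] p Some by auto
    have "continuous (at w) rfz" unfolding rfz_def by (intro continuous_intros) (use nz in auto)
    then have "eventually (\<lambda>z. dist (rfz z) (rfz w) < 1) (at w)"
      using tendstoD[of rfz "rfz w" "at w" 1] unfolding continuous_at by simp
    then have "eventually (\<lambda>z. Some z \<notin> {a,b} \<longrightarrow> norm (\<phi> (Some z)) \<le> norm (rfz w) + 1) (P1_at p)"
      unfolding Some P1_at_def option.case
    proof (rule eventually_mono, intro impI)
      fix z assume d: "dist (rfz z) (rfz w) < 1" and z: "Some z \<notin> {a,b}"
      have "norm (rfz z) \<le> norm (rfz w) + 1"
        using d norm_triangle_ineq2[of "rfz z" "rfz w"] by (simp add: dist_norm)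
      then show "norm (\<phi> (Some z)) \<le> norm (rfz w) + 1" using phi_Some[OF z] by simp
    qed
    then show ?thesis using that by blast
  next
    case None
    have reg: "degree (fst r1) \<le> degree (snd r1)" "degree (fst r2) \<le> degree (snd r2)"
      using phi[of None] p None by (auto simp: rf_regular_def)
    obtain C1 where C1: "eventually (\<lambda>z. norm (poly (fst r1) z / poly (snd r1) z) \<le> C1) at_infinity"
      using rf_inf_bound[OF r1ok reg(1)] by blast
    obtain C2 where C2: "eventually (\<lambda>z. norm (poly (fst r2) z / poly (snd r2) z) \<le> C2) at_infinity"
      using rf_inf_bound[OF r2ok reg(2)] by blast
    have "eventually (\<lambda>z. Some z \<notin> {a,b} \<longrightarrow> norm (\<phi> (Some z)) \<le> C1 + C2) (P1_at p)"
      unfolding None P1_at_def option.case using C1 C2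
    proof (eventually_elim)
      case (elim z)
      show ?case
      proof
        assume z: "Some z \<notin> {a,b}"
        have "norm (rfz z) \<le> C1 + C2"
          using elim norm_Pair_le[of "poly (fst r1) z / poly (snd r1) z" "poly (fst r2) z / poly (snd r2) z"]
          by (simp add: rfz_def)
        then show "norm (\<phi> (Some z)) \<le> C1 + C2" using phi_Some[OF z] by simp
      qed
    qed
    then show ?thesis using that by blast
  qed
  obtain d where d: "d > 0" "\<forall>q. dist (io q) (io p) < d \<and> q \<noteq> p \<longrightarrow>
      (\<exists>z. q = Some z \<and> (Some z \<notin> {a,b} \<longrightarrow> norm (\<phi> (Some z)) \<le> C0))"
    using P1_nbhd[OF C0] by blast
  show ?thesis
  proof (rule exI[of _ d], intro conjI d(1) exI[of _ "max C0 (norm (\<phi> p))"] allI impI)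
    fix q assume q: "q \<notin> {a,b} \<and> dist (io q) (io p) < d"
    show "norm (\<phi> q) \<le> max C0 (norm (\<phi> p))"
    proof (cases "q = p")
      case True then show ?thesis by simp
    next
      case False
      then obtain z where "q = Some z" "Some z \<notin> {a,b} \<longrightarrow> norm (\<phi> (Some z)) \<le> C0"
        using d(2) q by blast
      then show ?thesis using q by auto
    qed
  qed
qed

lemma far_bound:
  assumes e: "e > 0"
  shows "\<exists>M. \<forall>c\<in>Q. norm c > M \<longrightarrow> dist (io (psi c)) (io a) < e \<or> dist (io (psi c)) (io b) < e"
proof -
  define E where "E = range io \<inter> {s. e \<le> dist s (io a)} \<inter> {s. e \<le> dist s (io b)}"
  have cE: "compact E" unfolding E_def Int_assoc
    by (intro compact_Int_closed compact_range_io closed_Int closed_Collect_le continuous_intros)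
  have "\<forall>s\<in>E. \<exists>x. fst x > 0 \<and> (\<forall>q. q \<notin> {a,b} \<and> dist (io q) s < fst x \<longrightarrow> norm (\<phi> q) \<le> snd x)"
  proof
    fix s assume s: "s \<in> E"
    then obtain p where sp: "s = io p" by (auto simp: E_def)
    have "p \<notin> {a,b}" using s sp e by (auto simp: E_def)
    from loc_bound[OF this] obtain d C where "d > 0" "\<forall>q. q \<notin> {a,b} \<and> dist (io q) (io p) < d \<longrightarrow> norm (\<phi> q) \<le> C"
      by blast
    then show "\<exists>x. fst x > 0 \<and> (\<forall>q. q \<notin> {a,b} \<and> dist (io q) s < fst x \<longrightarrow> norm (\<phi> q) \<le> snd x)"
      using sp by (intro exI[of _ "(d, C)"]) auto
  qed
  then obtain DC where DC: "\<And>s. s \<in> E \<Longrightarrow> fst (DC s) > 0 \<and>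
      (\<forall>q. q \<notin> {a,b} \<and> dist (io q) s < fst (DC s) \<longrightarrow> norm (\<phi> q) \<le> snd (DC s))"
    using bchoice by metis
  have cov: "E \<subseteq> \<Union> ((\<lambda>s. ball s (fst (DC s))) ` E)"
    using DC by force
  obtain T where T: "T \<subseteq> E" "finite T" "E \<subseteq> \<Union> ((\<lambda>s. ball s (fst (DC s))) ` T)"
    using compactE_image[OF cE _ cov] by blast
  define M where "M = Max (insert 0 ((\<lambda>s. snd (DC s)) ` T))"
  show ?thesis
  proof (intro exI[of _ M] ballI impI)
    fix c assume c: "c \<in> Q" "norm c > M"
    show "dist (io (psi c)) (io a) < e \<or> dist (io (psi c)) (io b) < e"
    proof (rule ccontr)
      assume "\<not> ?thesis"
      then have "io (psi c) \<in> E" by (auto simp: E_def dist_commute)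
      then obtain t where t: "t \<in> T" "dist t (io (psi c)) < fst (DC t)" using T(3) by auto
      have "norm (\<phi> (psi c)) \<le> snd (DC t)"
        using DC[of t] t T(1) psi_U[OF c(1)] by (auto simp: dist_commute)
      also have "\<dots> \<le> M" unfolding M_def using t(1) T(2) by (intro Max_ge) auto
      finally show False using phi_psi[OF c(1)] c(2) by simp
    qed
  qed
qed

lemma ev_near:
  assumes e: "e > 0" and that: "p \<in> {a,b}"
  shows "eventually (\<lambda>z. dist (io (sig (Some z))) (io a) < e \<or> dist (io (sig (Some z))) (io b) < e) (P1_at p)"
proof -
  obtain M where M: "\<forall>c\<in>Q. norm c > M \<longrightarrow> dist (io (psi c)) (io a) < e \<or> dist (io (psi c)) (io b) < e"
    using far_bound[OF e] by blast
  show ?thesis using norm_big[OF that, of M] ev_U[of p]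
  proof (eventually_elim)
    case (elim z)
    have "cnj2 (\<phi> (Some z)) \<in> Q" using elim(2) by (intro cnj2_curveC phiQ)
    moreover have "norm (cnj2 (\<phi> (Some z))) > M" using elim(1) by (simp add: norm_cnj2)
    ultimately show ?case using M by (simp add: sig_def)
  qed
qed


lemma dab: "dist (io a) (io b) > 0"
  using ab inj_io by (auto dest: injD)

lemma cont_h:
  assumes N: "\<forall>z\<in>N. Some z \<notin> {a,b}"
  shows "continuous_on N (\<lambda>z. io (sig (Some z)))"
proof -
  have nz1: "\<forall>z\<in>N. poly (snd r1) z \<noteq> 0" and nz2: "\<forall>z\<in>N. poly (snd r2) z \<noteq> 0"
  proof -
    have "poly (snd r1) z \<noteq> 0 \<and> poly (snd r2) z \<noteq> 0" if "z \<in> N" for z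
    proof -
      have "Some z \<notin> {a,b}" using N that by (rule bspec)
      from phi_Some[OF this] show ?thesis by (rule conjunct2)
    qed
    then show "\<forall>z\<in>N. poly (snd r1) z \<noteq> 0" "\<forall>z\<in>N. poly (snd r2) z \<noteq> 0" by simp_all
  qed
  have "continuous_on N rfz" unfolding rfz_def
    by (intro continuous_on_Pair continuous_on_divide continuous_on_poly continuous_on_id nz1 nz2)
  then have c1: "continuous_on N (\<lambda>z. cnj2 (rfz z))" unfolding cnj2_def by (intro continuous_intros)
  have im: "(\<lambda>z. cnj2 (rfz z)) ` N \<subseteq> Q"
  proof
    fix c assume "c \<in> (\<lambda>z. cnj2 (rfz z)) ` N"
    then obtain z where z: "z \<in> N" "c = cnj2 (rfz z)" by blast
    have zU: "Some z \<notin> {a,b}" using N z(1) by blast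
    have "\<phi> (Some z) = rfz z" using phi_Some[OF zU] by blast
    then show "c \<in> Q" using z(2) cnj2_curveC[OF phiQ[OF zU]] by simp
  qed
  have c2: "continuous_on N (\<lambda>z. io (psi (cnj2 (rfz z))))"
    by (rule continuous_on_compose2[OF cont_io_psi c1 im])
  have eq: "\<And>z. z \<in> N \<Longrightarrow> io (psi (cnj2 (rfz z))) = io (sig (Some z))"
  proof -
    fix z assume "z \<in> N"
    then have zU: "Some z \<notin> {a,b}" using N by blast
    have "\<phi> (Some z) = rfz z" using phi_Some[OF zU] by blast
    then show "io (psi (cnj2 (rfz z))) = io (sig (Some z))" by (simp add: sig_def)
  qed
  show ?thesis by (rule continuous_on_cong[THEN iffD1, OF refl eq c2])
qed

lemma dichot:
  assumes p: "p \<in> {a,b}"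
  shows "((\<lambda>z. io (sig (Some z))) \<longlongrightarrow> io a) (P1_at p) \<or> ((\<lambda>z. io (sig (Some z))) \<longlongrightarrow> io b) (P1_at p)"
proof -
  define h where "h z = io (sig (Some z))" for z
  have h_eq: "h = (\<lambda>z. io (sig (Some z)))" by (rule ext) (simp add: h_def)
  define d where "d = dist (io a) (io b)"
  have d0: "d > 0" using dab by (simp add: d_def)
  define e0 where "e0 = d / 3"
  have e0: "e0 > 0" using d0 by (simp add: e0_def)
  have tri: "d \<le> dist (h z) (io a) + dist (h z) (io b)" for z
    unfolding d_def using dist_triangle[of "io a" "io b" "h z"] by (simp add: dist_commute)
  have ev: "eventually (\<lambda>z. Some z \<notin> {a,b} \<and> (dist (h z) (io a) < e0 \<or> dist (h z) (io b) < e0)) (P1_at p)"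
    using ev_U[of p] ev_near[OF e0 p] by (auto simp: h_def elim: eventually_elim2)
  obtain N where N: "connected N" "\<forall>z\<in>N. Some z \<notin> {a,b} \<and> (dist (h z) (io a) < e0 \<or> dist (h z) (io b) < e0)"
      "eventually (\<lambda>z. z \<in> N) (P1_at p)"
    using conn_nbhd[OF ev] by blast
  have ch: "continuous_on N h" unfolding h_def using cont_h N(2) by blast
  define g where "g z = dist (h z) (io a)" for z
  have cg: "continuous_on N g" unfolding g_def by (intro continuous_intros ch)
  have cgN: "connected (g ` N)" by (rule connected_continuous_image[OF cg N(1)])
  have split: "(\<forall>z\<in>N. dist (h z) (io a) < e0) \<or> (\<forall>z\<in>N. dist (h z) (io b) < e0)"
  proof (rule ccontr)
    assume "\<not> ?thesis"
    then obtain z1 z2 where z: "z1 \<in> N" "\<not> dist (h z1) (io a) < e0" "z2 \<in> N" "\<not> dist (h z2) (io b) < e0"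
      by blast
    have b1: "dist (h z1) (io b) < e0" using z(1,2) N(2) by blast
    have g1: "g z1 \<ge> 2 * e0" using b1 tri[of z1] unfolding g_def e0_def by linarith
    have g2: "g z2 < e0" using z(3,4) N(2) unfolding g_def by blast
    have "3/2 * e0 \<in> g ` N"
      by (rule connectedD_interval[OF cgN, of "g z2" "g z1"]) (use z g1 g2 e0 in auto)
    then obtain z where zz: "z \<in> N" "g z = 3/2 * e0" by auto
    have "dist (h z) (io a) < e0 \<or> dist (h z) (io b) < e0" using zz(1) N(2) by blast
    then show False using zz(2) tri[of z] e0 unfolding g_def e0_def by linarith
  qed
  then show ?thesis
  proof
    assume A: "\<forall>z\<in>N. dist (h z) (io a) < e0"
    have "(h \<longlongrightarrow> io a) (P1_at p)"
    proof (rule tendstoI)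
      fix e :: real assume e: "e > 0"
      have "min e e0 > 0" using e e0 by simp
      from ev_near[OF this p] N(3)
      show "eventually (\<lambda>z. dist (h z) (io a) < e) (P1_at p)"
      proof (eventually_elim)
        case (elim z)
        have a1: "dist (h z) (io a) < e0" using A elim(2) by blast
        have disj: "dist (h z) (io a) < min e e0 \<or> dist (h z) (io b) < min e e0"
          using elim(1) by (simp add: h_def)
        then show ?case
        proof
          assume "dist (h z) (io a) < min e e0" then show ?thesis by simp
        next
          assume "dist (h z) (io b) < min e e0"
          then have "dist (h z) (io b) < e0" by simp
          then show ?thesis using a1 tri[of z] d0 unfolding e0_def by linarith
        qed
      qed
    qed
    then show ?thesis by (simp add: h_eq)
  next
    assume B: "\<forall>z\<in>N. dist (h z) (io b) < e0"
    have "(h \<longlongrightarrow> io b) (P1_at p)"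
    proof (rule tendstoI)
      fix e :: real assume e: "e > 0"
      have "min e e0 > 0" using e e0 by simp
      from ev_near[OF this p] N(3)
      show "eventually (\<lambda>z. dist (h z) (io b) < e) (P1_at p)"
      proof (eventually_elim)
        case (elim z)
        have a1: "dist (h z) (io b) < e0" using B elim(2) by blast
        have disj: "dist (h z) (io a) < min e e0 \<or> dist (h z) (io b) < min e e0"
          using elim(1) by (simp add: h_def)
        then show ?case
        proof
          assume "dist (h z) (io b) < min e e0" then show ?thesis by simp
        next
          assume "dist (h z) (io a) < min e e0"
          then have "dist (h z) (io a) < e0" by simp
          then show ?thesis using a1 tri[of z] d0 unfolding e0_def by linarith
        qed
      qed
    qed
    then show ?thesis by (simp add: h_eq)
  qed
qed


lemma swap:
  assumes p: "p \<in> {a,b}" and q: "q \<in> {a,b}" and pq: "p \<noteq> q"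
    and t: "((\<lambda>z. io (sig (Some z))) \<longlongrightarrow> io q) (P1_at p)"
  shows "((\<lambda>z. io (sig (Some z))) \<longlongrightarrow> io p) (P1_at q)"
proof -
  have ab_pq: "{a,b} = {p,q}" using p q pq by auto
  from dichot[OF q] have "((\<lambda>z. io (sig (Some z))) \<longlongrightarrow> io p) (P1_at q) \<or>
      ((\<lambda>z. io (sig (Some z))) \<longlongrightarrow> io q) (P1_at q)"
    using p q pq by auto
  then show ?thesis
  proof
    assume tq: "((\<lambda>z. io (sig (Some z))) \<longlongrightarrow> io q) (P1_at q)"
    define d where "d = dist (io p) (io q)"
    have d0: "d > 0" using pq inj_io by (auto simp: d_def dest: injD)
    define eta where "eta = d / 2"
    have eta: "eta > 0" using d0 by (simp add: eta_def)
    have Eq: "eventually (\<lambda>w. Some w \<notin> {a,b} \<and> dist (io (sig (Some w))) (io q) < eta) (P1_at q)"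
      using ev_U[of q] tendstoD[OF tq eta] by (auto elim: eventually_elim2)
    obtain del where del: "del > 0" "\<forall>r. dist (io r) (io q) < del \<and> r \<noteq> q \<longrightarrow>
        (\<exists>w. r = Some w \<and> (Some w \<notin> {a,b} \<and> dist (io (sig (Some w))) (io q) < eta))"
      using P1_nbhd[OF Eq] by blast
    have "eventually (\<lambda>z. False) (P1_at p)"
      using tendstoD[OF t del(1)] ev_U[of p] tendstoD[OF tendsto_io_P1_at eta]
    proof (eventually_elim)
      case (elim z)
      have zU: "Some z \<notin> {a,b}" using elim(2) .
      have sU: "sig (Some z) \<notin> {a,b}" using sig_U[OF zU] .
      then have "sig (Some z) \<noteq> q" using q by auto
      then obtain w where w: "sig (Some z) = Some w" "dist (io (sig (Some w))) (io q) < eta"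
        using del(2) elim(1) by blast
      have "sig (Some w) = Some z" using sig_sig[OF zU] w(1) by simp
      then have "dist (io (Some z)) (io q) < eta" using w(2) by simp
      moreover have "dist (io (Some z)) (io p) < eta" using elim(3) .
      ultimately have "d < 2 * eta"
        using dist_triangle[of "io p" "io q" "io (Some z)"] unfolding d_def
        by (simp add: dist_commute)
      then show False by (simp add: eta_def)
    qed
    then have "P1_at p = bot" by (simp add: eventually_False)
    then show ?thesis using P1_at_nontriv by blast
  qed
qed

lemma bounded_if_swap:
  assumes sa: "((\<lambda>z. io (sig (Some z))) \<longlongrightarrow> io b) (P1_at a)"
    and sb: "((\<lambda>z. io (sig (Some z))) \<longlongrightarrow> io a) (P1_at b)"
  shows "\<exists>M. \<forall>x y::real. evalF F x y = 0 \<longrightarrow> norm (x,y) \<le> M"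
proof -
  define d where "d = dist (io a) (io b)"
  have d0: "d > 0" using dab by (simp add: d_def)
  define eta where "eta = d / 2"
  have eta: "eta > 0" using d0 by (simp add: eta_def)
  obtain da where da: "da > 0" "\<forall>r. dist (io r) (io a) < da \<and> r \<noteq> a \<longrightarrow>
      (\<exists>z. r = Some z \<and> dist (io (sig (Some z))) (io b) < eta)"
    using P1_nbhd[OF tendstoD[OF sa eta]] by blast
  obtain db where db: "db > 0" "\<forall>r. dist (io r) (io b) < db \<and> r \<noteq> b \<longrightarrow>
      (\<exists>z. r = Some z \<and> dist (io (sig (Some z))) (io a) < eta)"
    using P1_nbhd[OF tendstoD[OF sb eta]] by blast
  define e where "e = min (min da db) eta"
  have e: "e > 0" using da db eta by (simp add: e_def)
  obtain M where M: "\<forall>c\<in>Q. norm c > M \<longrightarrow> dist (io (psi c)) (io a) < e \<or> dist (io (psi c)) (io b) < e"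
    using far_bound[OF e] by blast
  have "\<forall>x y::real. evalF F x y = 0 \<longrightarrow> norm (x,y) \<le> M"
  proof (intro allI impI)
    fix x y :: real assume xy: "evalF F x y = 0"
    show "norm (x,y) \<le> M"
    proof (rule ccontr)
      assume big: "\<not> norm (x,y) \<le> M"
      define c where "c = (complex_of_real x, complex_of_real y)"
      have cQ: "c \<in> Q" using xy of_real_evalF[of F x y] by (simp add: c_def curveC_def)
      have cc: "cnj2 c = c" by (simp add: c_def cnj2_def)
      have nc: "norm c = norm (x,y)" by (simp add: c_def norm_Pair)
      define r where "r = psi c"
      have rU: "r \<notin> {a,b}" using psi_U[OF cQ] by (simp add: r_def)
      have sr: "sig r = r" using phi_psi[OF cQ] cc by (simp add: sig_def r_def)
      have near: "dist (io r) (io a) < e \<or> dist (io r) (io b) < e"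
        using M cQ big nc by (auto simp: r_def)
      have tri: "d \<le> dist (io r) (io a) + dist (io r) (io b)"
        unfolding d_def using dist_triangle[of "io a" "io b" "io r"] by (simp add: dist_commute)
      show False using near
      proof
        assume A: "dist (io r) (io a) < e"
        then have "dist (io r) (io a) < da" by (simp add: e_def)
        then obtain z where z: "r = Some z" "dist (io (sig (Some z))) (io b) < eta"
          using da(2) rU by blast
        have "dist (io r) (io b) < eta" using z sr by simp
        moreover have "dist (io r) (io a) < eta" using A by (simp add: e_def)
        ultimately show False using tri by (simp add: eta_def)
      next
        assume B: "dist (io r) (io b) < e"
        then have "dist (io r) (io b) < db" by (simp add: e_def)
        then obtain z where z: "r = Some z" "dist (io (sig (Some z))) (io a) < eta"
          using db(2) rU by blast
        have "dist (io r) (io a) < eta" using z sr by simp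
        moreover have "dist (io r) (io b) < eta" using B by (simp add: e_def)
        ultimately show False using tri by (simp add: eta_def)
      qed
    qed
  qed
  then show ?thesis by blast
qed

lemma all_fixed:
  assumes surjR: "\<forall>r::real. \<exists>x y::real. evalF F x y = r"
    and p: "p \<in> {a,b}"
  shows "((\<lambda>z. io (sig (Some z))) \<longlongrightarrow> io p) (P1_at p)"
proof (rule ccontr)
  assume nf: "\<not> ?thesis"
  define q where "q = (if p = a then b else a)"
  have q: "q \<in> {a,b}" "q \<noteq> p" using p ab by (auto simp: q_def)
  have tq: "((\<lambda>z. io (sig (Some z))) \<longlongrightarrow> io q) (P1_at p)"
  proof (cases "p = a")
    case True then show ?thesis using dichot[OF p] nf by (simp add: q_def)
  next
    case False then have "p = b" using p by auto
    then show ?thesis using dichot[OF p] nf False by (simp add: q_def)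
  qed
  have tp: "((\<lambda>z. io (sig (Some z))) \<longlongrightarrow> io p) (P1_at q)"
    by (rule swap[OF p q(1) q(2)[symmetric] tq])
  have "\<exists>M. \<forall>x y::real. evalF F x y = 0 \<longrightarrow> norm (x,y) \<le> M"
  proof (cases "p = a")
    case True
    then have "q = b" using q ab by auto
    then show ?thesis using bounded_if_swap tq tp True by simp
  next
    case False
    then have "p = b" "q = a" using p q ab by auto
    then show ?thesis using bounded_if_swap tq tp by simp
  qed
  then obtain M where "\<And>x y::real. evalF F x y = 0 \<Longrightarrow> norm (x,y) \<le> M" by blast
  then show False using real_bounded_zero_not_surj surjR by blast
qed

lemma real_place_ok:
  assumes surjR: "\<forall>r::real. \<exists>x y::real. evalF F x y = r"
    and p: "p \<in> {a,b}"
  shows "real_place a b \<phi> p"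
proof -
  have t: "((\<lambda>z. io (sig (Some z))) \<longlongrightarrow> io p) (P1_at p)" by (rule all_fixed[OF surjR p])
  have ev: "eventually (\<lambda>z. io (sig (Some z)) = io (inv_into (UNIV - {a, b}) \<phi> (cnj2 (\<phi> (Some z))))) (P1_at p)"
    using ev_U[of p]
  proof (rule eventually_mono)
    fix z assume zU: "Some z \<notin> {a,b}"
    have "cnj2 (\<phi> (Some z)) \<in> Q" using zU by (intro cnj2_curveC phiQ)
    then show "io (sig (Some z)) = io (inv_into (UNIV - {a, b}) \<phi> (cnj2 (\<phi> (Some z))))"
      by (simp add: inv_phi sig_def)
  qed
  have "((\<lambda>z. io (inv_into (UNIV - {a, b}) \<phi> (cnj2 (\<phi> (Some z))))) \<longlongrightarrow> io p) (P1_at p)"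
    using t ev by (rule Lim_transform_eventually)
  then show ?thesis unfolding real_place_def by (rule P1_tendsto_io)
qed

end

theorem mainTheorem13:
  fixes F :: "rat poly poly" and a b :: P1 and \<phi> :: "P1 \<Rightarrow> complex \<times> complex"
  assumes surjR: "\<forall>r::real. \<exists>x y::real. evalF F x y = r"
    and natZ: "\<forall>n::nat. \<exists>x y::int. evalF F (real_of_int x) (real_of_int y) = real n"
    and smooth: "smooth_curve F"
    and Gm: "iso_to_Gm F"
    and iso: "is_iso_P1 a b F \<phi>"
  shows "real_place a b \<phi> a \<and> real_place a b \<phi> b"
proof -
  from iso have ab: "a \<noteq> b" unfolding is_iso_P1_def by blast
  from iso obtain r1 r2 where r: "rf_ok r1" "rf_ok r2"
    "\<forall>p \<in> UNIV - {a, b}. rf_regular r1 p \<and> rf_regular r2 p \<and> \<phi> p = (rf_val r1 p, rf_val r2 p)"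
    unfolding is_iso_P1_def by blast
  from iso have img: "\<phi> ` (UNIV - {a, b}) \<subseteq> curveC F" unfolding is_iso_P1_def by blast
  from iso obtain g0 g1 where g:
    "\<forall>(x, y) \<in> curveC F. (evalC g0 x y \<noteq> 0 \<or> evalC g1 x y \<noteq> 0) \<and>
             proj (evalC g0 x y) (evalC g1 x y) \<in> UNIV - {a, b} \<and>
             \<phi> (proj (evalC g0 x y) (evalC g1 x y)) = (x, y)"
    "\<forall>p \<in> UNIV - {a, b}. proj (evalC g0 (fst (\<phi> p)) (snd (\<phi> p)))
                                    (evalC g1 (fst (\<phi> p)) (snd (\<phi> p))) = p"
    unfolding is_iso_P1_def by blast
  interpret setting F a b \<phi> r1 r2 g0 g1
  proof
    show "a \<noteq> b" by fact
    show "snd r1 \<noteq> 0" "snd r2 \<noteq> 0" using r(1,2) by (auto simp: rf_ok_def)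
    show "\<And>p. p \<notin> {a,b} \<Longrightarrow> rf_regular r1 p \<and> rf_regular r2 p \<and> \<phi> p = (rf_val r1 p, rf_val r2 p)"
      using r(3) by blast
    show "\<And>p. p \<notin> {a,b} \<Longrightarrow> \<phi> p \<in> curveC F" using img by blast
    show "\<And>x y. (x,y) \<in> curveC F \<Longrightarrow> (evalC g0 x y \<noteq> 0 \<or> evalC g1 x y \<noteq> 0) \<and>
               proj (evalC g0 x y) (evalC g1 x y) \<notin> {a,b} \<and>
               \<phi> (proj (evalC g0 x y) (evalC g1 x y)) = (x,y)"
      using g(1) by blast
    show "\<And>p. p \<notin> {a,b} \<Longrightarrow>
               proj (evalC g0 (fst (\<phi> p)) (snd (\<phi> p))) (evalC g1 (fst (\<phi> p)) (snd (\<phi> p))) = p"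
      using g(2) by blast
  qed
  show ?thesis using real_place_ok[OF surjR] by blast
qed

end
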